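(* Let $F$ be a field, $n$ an even positive integer, and $A \in F^{n\times n}$ a matrix that is diagonalizable over an extension field of $F$ with $n$ distinct eigenvalues. For $t \in F$ let $$\widetilde{A} = \begin{bmatrix} I & -tI\\ 0 & I\end{bmatrix} A \begin{bmatrix} I & tI \\ 0 & I\end{bmatrix},$$ where $I$ is the $(n/2)\times(n/2)$ identity. Then for all but at most $n/2$ values of $t \in F$ the following holds: if $a = (a_1,\dots,a_{n/2})^T$ and $b = (b_1,\dots,b_{n/2})^T$ are vectors of independent indeterminates and $$v = \begin{bmatrix} a & 0 \\ 0 & b\end{bmatrix} \in F[a_1,\dots,a_{n/2},b_1,\dots,b_{n/2}]^{n\times 2},$$ then $\det \mathcal{K}(\widetilde{A}, v) = \det[\, v \mid \widetilde{A}v \mid \cdots \mid \widetilde{A}^{n/2-1} v\,]$ is a nonzero polynomial. In particular, if $F$ is infinite (or sufficiently large), there exist $a,b \in F^{n/2}$ for which $\mathcal{K}(\widetilde{A},v)$ is nonsingular.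
   Context: For $A \in F^{n\times n}$, $s \mid n$, $m = n/s$ and $v$ with $s$ columns, $\mathcal{K}(A,v) := [\, v \mid Av \mid \cdots \mid A^{m-1}v\,]$; here $s=2$ and $m = n/2$. *)

theory Defs
  imports "Jordan_Normal_Form.Determinant" "Jordan_Normal_Form.Ring_Hom_Matrix" "HOL-Library.Poly_Mapping"
begin

text \<open>Multivariate polynomials over 'a: finitely supported maps from monomials
  (exponent vectors) to coefficients.\<close>
type_synonym 'a mpoly = "(nat \<Rightarrow>\<^sub>0 nat) \<Rightarrow>\<^sub>0 'a"

definition mp_const :: "'a::comm_ring_1 \<Rightarrow> 'a mpoly" where
  "mp_const c = Poly_Mapping.single 0 c"

definition mp_var :: "nat \<Rightarrow> 'a::comm_ring_1 mpoly" where
  "mp_var i = Poly_Mapping.single (Poly_Mapping.single i 1) 1"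

definition krylov :: "'a::comm_ring_1 mat \<Rightarrow> 'a mat \<Rightarrow> 'a mat" where
  "krylov A v = (let n = dim_row A; s = dim_col v; m = n div s in
     mat n (m * s) (\<lambda>(i, j). (A ^\<^sub>m (j div s) * v) $$ (i, j mod s)))"

definition shear :: "nat \<Rightarrow> 'a::comm_ring_1 \<Rightarrow> 'a mat" where
  "shear m t = four_block_mat (1\<^sub>m m) (t \<cdot>\<^sub>m 1\<^sub>m m) (0\<^sub>m m m) (1\<^sub>m m)"

definition A_tilde :: "nat \<Rightarrow> 'a::comm_ring_1 \<Rightarrow> 'a mat \<Rightarrow> 'a mat" where
  "A_tilde m t A = shear m (- t) * A * shear m t"

definition vblock :: "nat \<Rightarrow> (nat \<Rightarrow> 'a::zero) \<Rightarrow> (nat \<Rightarrow> 'a) \<Rightarrow> 'a mat" where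
  "vblock m a b = mat (2 * m) 2
     (\<lambda>(i, j). if j = 0 then (if i < m then a i else 0)
               else (if i < m then 0 else b (i - m)))"

definition v_indet :: "nat \<Rightarrow> 'a::comm_ring_1 mpoly mat" where
  "v_indet m = vblock m (\<lambda>i. mp_var i) (\<lambda>i. mp_var (m + i))"

end

theory Submission
  imports Defs "Jordan_Normal_Form.Char_Poly"
begin


definition mmon :: "(nat \<Rightarrow> 'c::comm_monoid_mult) \<Rightarrow> (nat \<Rightarrow>\<^sub>0 nat) \<Rightarrow> 'c" where
  "mmon \<sigma> \<mu> = (\<Prod>i\<in>Poly_Mapping.keys \<mu>. \<sigma> i ^ Poly_Mapping.lookup \<mu> i)"

definition mpeval :: "('a::comm_ring_1 \<Rightarrow> 'c::comm_ring_1) \<Rightarrow> (nat \<Rightarrow> 'c) \<Rightarrow> 'a mpoly \<Rightarrow> 'c" where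
  "mpeval g \<sigma> p = (\<Sum>\<mu>\<in>Poly_Mapping.keys p. g (Poly_Mapping.lookup p \<mu>) * mmon \<sigma> \<mu>)"

lemma mmon_superset:
  assumes "finite K" "Poly_Mapping.keys \<mu> \<subseteq> K"
  shows "mmon \<sigma> \<mu> = (\<Prod>i\<in>K. \<sigma> i ^ Poly_Mapping.lookup \<mu> i)"
  unfolding mmon_def
  by (rule prod.mono_neutral_left[OF assms(1) assms(2)]) (auto simp: in_keys_iff)

lemma keys_add_nat: "Poly_Mapping.keys ((\<mu>::nat \<Rightarrow>\<^sub>0 nat) + \<nu>) = Poly_Mapping.keys \<mu> \<union> Poly_Mapping.keys \<nu>"
  by (auto simp: in_keys_iff lookup_add)

lemma mmon_add: "mmon \<sigma> (\<mu> + \<nu>) = mmon \<sigma> \<mu> * mmon \<sigma> \<nu>"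
proof -
  let ?K = "Poly_Mapping.keys \<mu> \<union> Poly_Mapping.keys \<nu>"
  have "mmon \<sigma> (\<mu> + \<nu>) = (\<Prod>i\<in>?K. \<sigma> i ^ Poly_Mapping.lookup (\<mu> + \<nu>) i)"
    by (rule mmon_superset) (auto simp: keys_add_nat)
  also have "\<dots> = (\<Prod>i\<in>?K. \<sigma> i ^ Poly_Mapping.lookup \<mu> i) * (\<Prod>i\<in>?K. \<sigma> i ^ Poly_Mapping.lookup \<nu> i)"
    by (simp add: lookup_add power_add prod.distrib)
  also have "\<dots> = mmon \<sigma> \<mu> * mmon \<sigma> \<nu>"
    by (subst (1 2) mmon_superset[of ?K]) auto
  finally show ?thesis .
qed

lemma mmon_zero[simp]: "mmon \<sigma> 0 = 1"
  unfolding mmon_def by simp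

lemma mmon_single[simp]: "mmon \<sigma> (Poly_Mapping.single i 1) = \<sigma> i"
  unfolding mmon_def by simp

lemma mpeval_superset:
  assumes "finite K" "Poly_Mapping.keys p \<subseteq> K" "g 0 = 0"
  shows "mpeval g \<sigma> p = (\<Sum>\<mu>\<in>K. g (Poly_Mapping.lookup p \<mu>) * mmon \<sigma> \<mu>)"
  unfolding mpeval_def
  by (rule sum.mono_neutral_left[OF assms(1) assms(2)]) (auto simp: in_keys_iff assms(3))

lemma keys_add_sub: "Poly_Mapping.keys (p + q) \<subseteq> Poly_Mapping.keys p \<union> Poly_Mapping.keys q"
  by (auto simp: in_keys_iff lookup_add)

context
  fixes g :: "'a::comm_ring_1 \<Rightarrow> 'c::comm_ring_1"
  assumes g: "comm_ring_hom g"
begin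

interpretation g: comm_ring_hom g by (rule g)

lemma mpeval_add: "mpeval g \<sigma> (p + q) = mpeval g \<sigma> p + mpeval g \<sigma> q"
proof -
  let ?K = "Poly_Mapping.keys p \<union> Poly_Mapping.keys q"
  have "mpeval g \<sigma> (p + q) = (\<Sum>\<mu>\<in>?K. g (Poly_Mapping.lookup (p+q) \<mu>) * mmon \<sigma> \<mu>)"
    by (rule mpeval_superset) (auto simp: keys_add_sub)
  also have "\<dots> = (\<Sum>\<mu>\<in>?K. g (Poly_Mapping.lookup p \<mu>) * mmon \<sigma> \<mu>) + (\<Sum>\<mu>\<in>?K. g (Poly_Mapping.lookup q \<mu>) * mmon \<sigma> \<mu>)"
    by (simp add: lookup_add g.hom_add distrib_right sum.distrib)
  also have "\<dots> = mpeval g \<sigma> p + mpeval g \<sigma> q"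
    by (subst (1 2) mpeval_superset[of ?K]) auto
  finally show ?thesis .
qed

lemma mpeval_zero[simp]: "mpeval g \<sigma> 0 = 0"
  unfolding mpeval_def by simp

lemma mpeval_sum: "mpeval g \<sigma> (sum f X) = (\<Sum>x\<in>X. mpeval g \<sigma> (f x))"
  by (induct X rule: infinite_finite_induct) (auto simp: mpeval_add)

lemma mpeval_single[simp]: "mpeval g \<sigma> (Poly_Mapping.single \<mu> c) = g c * mmon \<sigma> \<mu>"
  unfolding mpeval_def by (cases "c = 0") auto

lemma poly_mapping_sum_singles:
  "p = (\<Sum>\<mu>\<in>Poly_Mapping.keys p. Poly_Mapping.single \<mu> (Poly_Mapping.lookup p \<mu>))"
proof (rule poly_mapping_eqI)
  fix k
  show "Poly_Mapping.lookup p k = Poly_Mapping.lookup (\<Sum>\<mu>\<in>Poly_Mapping.keys p. Poly_Mapping.single \<mu> (Poly_Mapping.lookup p \<mu>)) k"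
    by (auto simp: lookup_sum lookup_single when_def in_keys_iff)
qed

lemma mpeval_mult: "mpeval g \<sigma> (p * q) = mpeval g \<sigma> p * mpeval g \<sigma> q"
proof -
  let ?P = "Poly_Mapping.keys p" and ?Q = "Poly_Mapping.keys q"
  let ?lp = "Poly_Mapping.lookup p" and ?lq = "Poly_Mapping.lookup q"
  have "p * q = (\<Sum>\<mu>\<in>?P. Poly_Mapping.single \<mu> (?lp \<mu>)) * (\<Sum>\<nu>\<in>?Q. Poly_Mapping.single \<nu> (?lq \<nu>))"
    by (subst (1) poly_mapping_sum_singles[of p], subst (1) poly_mapping_sum_singles[of q]) (rule refl)
  also have "\<dots> = (\<Sum>\<mu>\<in>?P. \<Sum>\<nu>\<in>?Q. Poly_Mapping.single (\<mu> + \<nu>) (?lp \<mu> * ?lq \<nu>))"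
    by (simp add: sum_distrib_left sum_distrib_right mult_single) (subst sum.swap, rule refl)
  finally have pq: "p * q = \<dots>" .
  have "mpeval g \<sigma> (p * q) = (\<Sum>\<mu>\<in>?P. \<Sum>\<nu>\<in>?Q. g (?lp \<mu>) * mmon \<sigma> \<mu> * (g (?lq \<nu>) * mmon \<sigma> \<nu>))"
    unfolding pq mpeval_sum mpeval_single by (simp add: g.hom_mult mmon_add ac_simps)
  also have "\<dots> = mpeval g \<sigma> p * mpeval g \<sigma> q"
    unfolding mpeval_def by (simp add: sum_distrib_left sum_distrib_right) (subst sum.swap, rule refl)
  finally show ?thesis .
qed

lemma mpeval_one[simp]: "mpeval g \<sigma> 1 = 1"
proof -
  have "(1 :: 'a mpoly) = Poly_Mapping.single 0 1" by simp
  then show ?thesis by (metis mpeval_single mmon_zero g.hom_one mult_1)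
qed

lemma mpeval_hom: "comm_ring_hom (mpeval g \<sigma>)"
  by (unfold_locales) (auto simp: mpeval_add mpeval_mult)

lemma mpeval_const[simp]: "mpeval g \<sigma> (mp_const c) = g c"
  unfolding mp_const_def by simp

lemma mpeval_var[simp]: "mpeval g \<sigma> (mp_var i) = \<sigma> i"
  unfolding mp_var_def mpeval_single mmon_single by simp

end

lemma mpeval_compose:
  assumes H: "comm_ring_hom H"
  shows "H (mpeval g \<sigma> p) = mpeval (H \<circ> g) (H \<circ> \<sigma>) p"
proof -
  interpret H: comm_ring_hom H by (rule H)
  show ?thesis unfolding mpeval_def mmon_def by (simp add: H.hom_sum H.hom_mult H.hom_prod H.hom_power)
qed



lemma krylov_carrier: "V \<in> carrier_mat n 2 \<Longrightarrow> M \<in> carrier_mat n n \<Longrightarrow> n = 2 * m \<Longrightarrow>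
  krylov M V \<in> carrier_mat n n"
  unfolding krylov_def Let_def by auto

lemma krylov_index: "V \<in> carrier_mat n 2 \<Longrightarrow> M \<in> carrier_mat n n \<Longrightarrow> n = 2 * m \<Longrightarrow>
  i < n \<Longrightarrow> j < n \<Longrightarrow> krylov M V $$ (i, j) = (M ^\<^sub>m (j div 2) * V) $$ (i, j mod 2)"
  unfolding krylov_def Let_def by auto

lemma krylov_hom:
  assumes E: "comm_ring_hom E" and V: "V \<in> carrier_mat n 2" and M: "M \<in> carrier_mat n n" and n: "n = 2 * m"
  shows "map_mat E (krylov M V) = krylov (map_mat E M) (map_mat E V)"
proof -
  interpret E: comm_ring_hom E by (rule E)
  have MV: "map_mat E M \<in> carrier_mat n n" "map_mat E V \<in> carrier_mat n 2" using M V by auto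
  show ?thesis
  proof (rule eq_matI)
    fix i j assume i: "i < dim_row (krylov (map_mat E M) (map_mat E V))" and j: "j < dim_col (krylov (map_mat E M) (map_mat E V))"
    then have i: "i < n" and j: "j < n" using krylov_carrier[OF MV(2) MV(1) n] by auto
    have jm: "j mod 2 < 2" by auto
    have "map_mat E (krylov M V) $$ (i, j) = E ((M ^\<^sub>m (j div 2) * V) $$ (i, j mod 2))"
      using krylov_index[OF V M n i j] krylov_carrier[OF V M n] i j by auto
    also have "\<dots> = map_mat E (M ^\<^sub>m (j div 2) * V) $$ (i, j mod 2)" using i jm M V by auto
    also have "map_mat E (M ^\<^sub>m (j div 2) * V) = map_mat E (M ^\<^sub>m (j div 2)) * map_mat E V"
      by (rule E.mat_hom_mult[OF pow_carrier_mat[OF M] V])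
    also have "map_mat E (M ^\<^sub>m (j div 2)) = (map_mat E M) ^\<^sub>m (j div 2)"
      by (rule E.mat_hom_pow[OF M])
    also have "((map_mat E M) ^\<^sub>m (j div 2) * map_mat E V) $$ (i, j mod 2) = krylov (map_mat E M) (map_mat E V) $$ (i, j)"
      using krylov_index[OF MV(2) MV(1) n i j] by simp
    finally show "map_mat E (krylov M V) $$ (i, j) = krylov (map_mat E M) (map_mat E V) $$ (i, j)" .
  qed (use krylov_carrier[OF V M n] krylov_carrier[OF MV(2) MV(1) n] in auto)
qed

lemma vblock_carrier[simp]: "vblock m a b \<in> carrier_mat (2*m) 2"
  unfolding vblock_def by auto

lemma vblock_index: "i < 2*m \<Longrightarrow> j < 2 \<Longrightarrow> vblock m a b $$ (i,j) =
   (if j = 0 then (if i < m then a i else 0) else (if i < m then 0 else b (i - m)))"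
  unfolding vblock_def by auto

lemma map_vblock: "E 0 = 0 \<Longrightarrow> map_mat E (vblock m a b) = vblock m (E \<circ> a) (E \<circ> b)"
  by (rule eq_matI) (auto simp: vblock_def)

lemma eval_det_krylov:
  assumes g: "comm_ring_hom g" and M: "M \<in> carrier_mat (2*m) (2*m)"
  shows "mpeval g \<sigma> (det (krylov (map_mat mp_const M) (v_indet m))) =
    det (krylov (map_mat g M) (vblock m (\<lambda>i. \<sigma> i) (\<lambda>i. \<sigma> (m + i))))"
proof -
  interpret E: comm_ring_hom "mpeval g \<sigma>" by (rule mpeval_hom[OF g])
  have "mpeval g \<sigma> (det (krylov (map_mat mp_const M) (v_indet m))) =
    det (map_mat (mpeval g \<sigma>) (krylov (map_mat mp_const M) (v_indet m)))" by simp
  also have "map_mat (mpeval g \<sigma>) (krylov (map_mat mp_const M) (v_indet m)) =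
     krylov (map_mat (mpeval g \<sigma>) (map_mat mp_const M)) (map_mat (mpeval g \<sigma>) (v_indet m))"
    by (rule krylov_hom[OF mpeval_hom[OF g], where m = m]) (auto simp: v_indet_def M)
  also have "map_mat (mpeval g \<sigma>) (map_mat mp_const M) = map_mat g M"
    by (rule eq_matI) (auto simp: mpeval_const[OF g])
  also have "map_mat (mpeval g \<sigma>) (v_indet m) = vblock m (\<lambda>i. \<sigma> i) (\<lambda>i. \<sigma> (m + i))"
    unfolding v_indet_def by (subst map_vblock) (auto simp: o_def mpeval_var[OF g])
  finally show ?thesis .
qed

lemma pow_conj:
  assumes W: "W \<in> carrier_mat n n" and M: "M \<in> carrier_mat n n" and N: "N \<in> carrier_mat n n"
    and WM: "W * M = N * W"
  shows "W * M ^\<^sub>m k = N ^\<^sub>m k * W"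
proof (induct k)
  case 0 then show ?case using W M N by simp
next
  case (Suc k)
  have "W * M ^\<^sub>m Suc k = (W * M ^\<^sub>m k) * M" using W M by (simp add: assoc_mult_mat[of _ n n _ n _ n])
  also have "\<dots> = N ^\<^sub>m k * (W * M)" unfolding Suc using W M N by (simp add: assoc_mult_mat[of _ n n _ n _ n])
  also have "\<dots> = N ^\<^sub>m k * N * W" unfolding WM using W M N by (simp add: assoc_mult_mat[of _ n n _ n _ n])
  finally show ?case by simp
qed

lemma krylov_conj:
  assumes W: "W \<in> carrier_mat n n" and M: "M \<in> carrier_mat n n" and N: "N \<in> carrier_mat n n"
    and WM: "W * M = N * W" and V: "V \<in> carrier_mat n 2" and n: "n = 2 * m"
  shows "W * krylov M V = krylov N (W * V)"
proof -
  have WV: "W * V \<in> carrier_mat n 2" using W V by auto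
  show ?thesis
  proof (rule eq_matI)
    fix i j assume "i < dim_row (krylov N (W * V))" "j < dim_col (krylov N (W * V))"
    then have i: "i < n" and j: "j < n" using krylov_carrier[OF WV N n] by auto
    have jm: "j mod 2 < 2" by auto
    have "(W * krylov M V) $$ (i, j) = row W i \<bullet> col (krylov M V) j"
      using W krylov_carrier[OF V M n] i j by simp
    also have "col (krylov M V) j = col (M ^\<^sub>m (j div 2) * V) (j mod 2)"
      by (rule eq_vecI) (use krylov_carrier[OF V M n] krylov_index[OF V M n] i j M V in auto)
    also have "row W i \<bullet> \<dots> = (W * (M ^\<^sub>m (j div 2) * V)) $$ (i, j mod 2)"
      using W M V i jm by simp
    also have "W * (M ^\<^sub>m (j div 2) * V) = (W * M ^\<^sub>m (j div 2)) * V"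
      using W M V by (simp add: assoc_mult_mat[of _ n n _ n _ 2])
    also have "\<dots> = (N ^\<^sub>m (j div 2) * W) * V" unfolding pow_conj[OF W M N WM] ..
    also have "\<dots> = N ^\<^sub>m (j div 2) * (W * V)" using W N V by (simp add: assoc_mult_mat[of _ n n _ n _ 2])
    finally show "(W * krylov M V) $$ (i, j) = krylov N (W * V) $$ (i, j)"
      using krylov_index[OF WV N n i j] by simp
  qed (use W krylov_carrier[OF V M n] krylov_carrier[OF WV N n] in auto)
qed

lemma det_krylov_conj:
  assumes W: "W \<in> carrier_mat n n" and M: "M \<in> carrier_mat n n" and N: "N \<in> carrier_mat n n"
    and WM: "W * M = N * W" and V: "V \<in> carrier_mat n 2" and n: "n = 2 * m"
    and nz: "det (krylov N (W * V)) \<noteq> 0"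
  shows "det (krylov M V) \<noteq> 0"
proof -
  have "det (krylov N (W * V)) = det W * det (krylov M V)"
    unfolding krylov_conj[OF assms(1-6), symmetric]
    by (rule det_mult[OF W krylov_carrier[OF V M n]])
  with nz show ?thesis by auto
qed



lemma det_identical_cols':
  assumes A: "A \<in> carrier_mat n n" and ij: "i \<noteq> j" and i: "i < n" and j: "j < n"
    and c: "\<And>r. r < n \<Longrightarrow> A $$ (r, i) = A $$ (r, j)"
  shows "det A = 0"
proof -
  have "det A = det (transpose_mat A)" using det_transpose[OF A] by simp
  also have "\<dots> = 0"
    by (rule det_identical_rows[OF _ ij i j]) (use A c i j in \<open>auto intro!: eq_vecI\<close>)
  finally show ?thesis .
qed

lemma det_mat0: "det (mat 0 0 f) = 1"
proof -
  have "mat 0 0 f = 1\<^sub>m 0" by (rule eq_matI) auto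
  then show ?thesis by simp
qed

lemma col_select:
  fixes B :: "'a::field mat"
  assumes "B \<in> carrier_mat k n"
    and "\<And>y. (\<forall>c<n. (\<Sum>r<k. y r * B $$ (r,c)) = 0) \<Longrightarrow> (\<forall>r<k. y r = 0)"
  shows "\<exists>f. (\<forall>c<k. f c < n) \<and> inj_on f {..<k} \<and> det (mat k k (\<lambda>(r,c). B $$ (r, f c))) \<noteq> 0"
  using assms
proof (induct k arbitrary: B)
  case 0
  show ?case by (rule exI[of _ id]) (simp add: det_mat0)
next
  case (Suc k)
  note B = Suc.prems(1) and ker = Suc.prems(2)
  define B' where "B' = mat k n (\<lambda>(r,c). B $$ (r,c))"
  have B': "B' \<in> carrier_mat k n" unfolding B'_def by auto
  have ker': "\<forall>r<k. y r = 0" if y: "\<forall>c<n. (\<Sum>r<k. y r * B' $$ (r,c)) = 0" for y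
  proof -
    define y' where "y' = (\<lambda>r. if r < k then y r else 0)"
    have "\<forall>c<n. (\<Sum>r<Suc k. y' r * B $$ (r,c)) = 0"
    proof (intro allI impI)
      fix c assume c: "c < n"
      have "(\<Sum>r<Suc k. y' r * B $$ (r,c)) = (\<Sum>r<k. y r * B' $$ (r,c))"
        unfolding B'_def y'_def using c by (simp add: lessThan_Suc)
      then show "(\<Sum>r<Suc k. y' r * B $$ (r,c)) = 0" using y c by simp
    qed
    note kk = ker[OF this]
    show ?thesis
    proof (intro allI impI)
      fix r assume r: "r < k"
      then have "r < Suc k" by simp
      with kk have "y' r = 0" by blast
      with r show "y r = 0" unfolding y'_def by simp
    qed
  qed
  from Suc.hyps[OF B' ker'] obtain f' where f'n: "\<forall>c<k. f' c < n" and f'inj: "inj_on f' {..<k}"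
    and f'det: "det (mat k k (\<lambda>(r,c). B' $$ (r, f' c))) \<noteq> 0" by blast
  define C where "C j = mat (Suc k) (Suc k) (\<lambda>(r,c). B $$ (r, if c < k then f' c else j))" for j
  have C: "C j \<in> carrier_mat (Suc k) (Suc k)" for j unfolding C_def by auto
  define cof where "cof r = cofactor (C 0) r k" for r
  have cof_eq: "cofactor (C j) r k = cof r" for j r
  proof -
    have "mat_delete (C j) r k = mat_delete (C 0) r k"
      by (rule eq_matI) (auto simp: mat_delete_def C_def)
    then show ?thesis unfolding cof_def cofactor_def by simp
  qed
  have detC: "det (C j) = (\<Sum>r<Suc k. B $$ (r, j) * cof r)" for j
    unfolding laplace_expansion_column[OF C, of k, OF lessI] cof_eq[symmetric, of _ j]
    by (rule sum.cong) (auto simp: C_def)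
  have cofk: "cof k \<noteq> 0"
  proof -
    have "mat_delete (C 0) k k = mat k k (\<lambda>(r,c). B' $$ (r, f' c))"
      by (rule eq_matI) (auto simp: mat_delete_def C_def B'_def f'n)
    then have "cof k = det (mat k k (\<lambda>(r,c). B' $$ (r, f' c)))"
      unfolding cof_def cofactor_def by simp
    with f'det show ?thesis by simp
  qed
  have "\<exists>j<n. j \<notin> f' ` {..<k} \<and> det (C j) \<noteq> 0"
  proof (rule ccontr)
    assume "\<not> ?thesis"
    then have no: "\<And>j. j < n \<Longrightarrow> j \<notin> f' ` {..<k} \<Longrightarrow> det (C j) = 0" by blast
    have all: "det (C j) = 0" if j: "j < n" for j
    proof (cases "j \<in> f' ` {..<k}")
      case True
      then obtain c where c: "c < k" and jc: "j = f' c" by auto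
      show ?thesis
        by (rule det_identical_cols'[OF C, of c k]) (use c jc in \<open>auto simp: C_def\<close>)
    next
      case False then show ?thesis using no j by auto
    qed
    have "\<forall>r<Suc k. cof r = 0"
      by (rule ker) (use all detC in \<open>auto simp: mult.commute\<close>)
    with cofk show False by auto
  qed
  then obtain j where j: "j < n" "j \<notin> f' ` {..<k}" and dj: "det (C j) \<noteq> 0" by blast
  define f where "f = f'(k := j)"
  have "mat (Suc k) (Suc k) (\<lambda>(r,c). B $$ (r, f c)) = C j"
    by (rule eq_matI) (auto simp: C_def f_def)
  moreover have "\<forall>c<Suc k. f c < n" using f'n j unfolding f_def by (auto simp: less_Suc_eq)
  moreover have "inj_on f {..<Suc k}"
    unfolding f_def lessThan_Suc using f'inj j by (auto simp: inj_on_def)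
  ultimately show ?case using dj by metis
qed



lemma smult_one_mult_vec: fixes c :: "'a::comm_ring_1" assumes v: "v \<in> carrier_vec m" shows "(c \<cdot>\<^sub>m 1\<^sub>m m) *\<^sub>v v = c \<cdot>\<^sub>v v"
proof (rule eq_vecI)
  fix i assume "i < dim_vec (c \<cdot>\<^sub>v v)"
  then have i: "i < m" using v by simp
  have "((c \<cdot>\<^sub>m 1\<^sub>m m) *\<^sub>v v) $ i = (\<Sum>j\<in>{0..<m}. (if i = j then c else 0) * v $ j)"
    using i v by (auto simp: scalar_prod_def intro!: sum.cong)
  also have "\<dots> = (\<Sum>j\<in>{0..<m}. if i = j then c * v $ j else 0)" by (rule sum.cong) auto
  also have "\<dots> = c * v $ i" using i by (simp add: sum.delta)
  finally show "((c \<cdot>\<^sub>m 1\<^sub>m m) *\<^sub>v v) $ i = (c \<cdot>\<^sub>v v) $ i" using i v by simp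
qed (use v in auto)

lemma pencil_bad_card:
  fixes a b :: "nat \<Rightarrow> nat \<Rightarrow> 'b::field"
  assumes db: "det (mat m m (\<lambda>(r,c). b r c)) \<noteq> 0"
  shows "finite {\<tau>. det (mat m m (\<lambda>(r,c). a r c - \<tau> * b r c)) = 0} \<and>
         card {\<tau>. det (mat m m (\<lambda>(r,c). a r c - \<tau> * b r c)) = 0} \<le> m"
proof -
  define M0 where "M0 = mat m m (\<lambda>(r,c). a r c)"
  define M1 where "M1 = mat m m (\<lambda>(r,c). b r c)"
  define Adj where "Adj = adj_mat M1"
  define B where "B = Adj * M0"
  have M0: "M0 \<in> carrier_mat m m" and M1: "M1 \<in> carrier_mat m m" unfolding M0_def M1_def by auto
  note adj = adj_mat[OF M1, folded Adj_def]
  have B: "B \<in> carrier_mat m m" unfolding B_def using adj M0 by auto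
  define d where "d = det M1"
  have d: "d \<noteq> 0" using db unfolding d_def M1_def .
  let ?cp = "char_poly B"
  have cp: "?cp \<noteq> 0" using degree_monic_char_poly[OF B] by (metis coeff_0 zero_neq_one)
  have sub: "{\<tau>. det (mat m m (\<lambda>(r,c). a r c - \<tau> * b r c)) = 0} \<subseteq> (\<lambda>x. x / d) ` {x. poly ?cp x = 0}"
  proof
    fix \<tau> assume "\<tau> \<in> {\<tau>. det (mat m m (\<lambda>(r,c). a r c - \<tau> * b r c)) = 0}"
    then have "det (mat m m (\<lambda>(r,c). a r c - \<tau> * b r c)) = 0" by simp
    from this[unfolded det_0_iff_vec_prod_zero_field[of _ m, OF mat_carrier]]
    obtain v where v: "v \<in> carrier_vec m" "v \<noteq> 0\<^sub>v m" and mv: "mat m m (\<lambda>(r,c). a r c - \<tau> * b r c) *\<^sub>v v = 0\<^sub>v m"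
      by blast
    have "M0 *\<^sub>v v = \<tau> \<cdot>\<^sub>v (M1 *\<^sub>v v)"
    proof (rule eq_vecI)
      fix i assume i: "i < dim_vec (\<tau> \<cdot>\<^sub>v (M1 *\<^sub>v v))"
      then have i: "i < m" using M1 by simp
      have "(mat m m (\<lambda>(r,c). a r c - \<tau> * b r c) *\<^sub>v v) $ i = 0" using mv i by simp
      then have "(\<Sum>j<m. (a i j - \<tau> * b i j) * v $ j) = 0"
        using i v by (simp add: scalar_prod_def row_def lessThan_atLeast0)
      then have "(\<Sum>j<m. a i j * v $ j) = \<tau> * (\<Sum>j<m. b i j * v $ j)"
        by (simp add: algebra_simps sum_subtractf sum_distrib_left)
      then show "(M0 *\<^sub>v v) $ i = (\<tau> \<cdot>\<^sub>v (M1 *\<^sub>v v)) $ i"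
        using i v by (simp add: M0_def M1_def scalar_prod_def row_def lessThan_atLeast0)
    qed (use M0 M1 in auto)
    then have "B *\<^sub>v v = Adj *\<^sub>v (\<tau> \<cdot>\<^sub>v (M1 *\<^sub>v v))"
      unfolding B_def using adj M0 v by (simp add: assoc_mult_mat_vec[of _ m m _ m])
    also have "\<dots> = \<tau> \<cdot>\<^sub>v ((Adj * M1) *\<^sub>v v)"
      using adj(1) M1 v by (simp add: mult_mat_vec assoc_mult_mat_vec[of _ m m _ m])
    also have "(Adj * M1) *\<^sub>v v = d \<cdot>\<^sub>v v" unfolding adj(3) d_def by (rule smult_one_mult_vec[OF v(1)])
    also have "\<tau> \<cdot>\<^sub>v (d \<cdot>\<^sub>v v) = (\<tau> * d) \<cdot>\<^sub>v v" by auto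
    finally have "eigenvalue B (\<tau> * d)" unfolding eigenvalue_def eigenvector_def using v B by auto
    then have "poly ?cp (\<tau> * d) = 0" using eigenvalue_root_char_poly[OF B] by simp
    moreover have "\<tau> = (\<tau> * d) / d" using d by simp
    ultimately show "\<tau> \<in> (\<lambda>x. x / d) ` {x. poly ?cp x = 0}" by blast
  qed
  have fin: "finite {x. poly ?cp x = 0}" using poly_roots_finite[OF cp] .
  have "card ((\<lambda>x. x / d) ` {x. poly ?cp x = 0}) \<le> card {x. poly ?cp x = 0}" by (rule card_image_le[OF fin])
  also have "\<dots> \<le> degree ?cp" by (rule card_poly_roots_bound[OF cp])
  also have "\<dots> = m" using degree_monic_char_poly[OF B] by simp
  finally show ?thesis using sub fin by (meson card_mono finite_imageI finite_subset le_trans)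
qed



lemma const_poly_hom: "comm_ring_hom (\<lambda>x::'a::comm_ring_1. [:x:])"
  by unfold_locales (auto simp: one_pCons)

lemma shear_carrier[simp]: "shear m t \<in> carrier_mat (2*m) (2*m)"
  unfolding shear_def by (auto simp: mult_2)

lemma shear_dims[simp]: "dim_row (shear m t) = 2*m" "dim_col (shear m t) = 2*m"
  unfolding shear_def by (auto simp: mult_2)

lemma shear_index: "i < 2*m \<Longrightarrow> j < 2*m \<Longrightarrow> shear m t $$ (i,j) =
  (if j < m then (if i = j then 1 else 0) else (if i = j - m then t else 0) + (if i = j then 1 else 0))"
  unfolding shear_def by (auto simp: mult_2)

lemma shear_mult: "shear m (c::'a::comm_ring_1) * shear m (-c) = 1\<^sub>m (2*m)"
proof -
  have "shear m c * shear m (-c) = four_block_mat (1\<^sub>m m * 1\<^sub>m m + c \<cdot>\<^sub>m 1\<^sub>m m * 0\<^sub>m m m)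
     (1\<^sub>m m * (-c \<cdot>\<^sub>m 1\<^sub>m m) + c \<cdot>\<^sub>m 1\<^sub>m m * 1\<^sub>m m)
     (0\<^sub>m m m * 1\<^sub>m m + 1\<^sub>m m * 0\<^sub>m m m) (0\<^sub>m m m * (-c \<cdot>\<^sub>m 1\<^sub>m m) + 1\<^sub>m m * 1\<^sub>m m)"
    unfolding shear_def by (rule mult_four_block_mat) auto
  also have "\<dots> = four_block_mat (1\<^sub>m m) (0\<^sub>m m m) (0\<^sub>m m m) (1\<^sub>m m)"
    by (intro arg_cong4[where f = four_block_mat]; rule eq_matI) auto
  finally show ?thesis by (simp add: mult_2)
qed

lemma map_shear: "comm_ring_hom E \<Longrightarrow> map_mat E (shear m c) = shear m (E c)"
proof -
  assume E: "comm_ring_hom E"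
  interpret E: comm_ring_hom E by (rule E)
  show ?thesis by (rule eq_matI) (auto simp: shear_index E.hom_add)
qed

lemma diag_pow_index:
  fixes D :: "'a::comm_ring_1 mat"
  assumes D: "D \<in> carrier_mat n n" and dg: "diagonal_mat D" and i: "i < n" and j: "j < n"
  shows "(D ^\<^sub>m k) $$ (i,j) = (if i = j then D $$ (i,i) ^ k else 0)"
  using i j
proof (induct k arbitrary: j)
  case 0 then show ?case using D by auto
next
  case (Suc k)
  have "(D ^\<^sub>m Suc k) $$ (i,j) = (\<Sum>l\<in>{0..<n}. (D ^\<^sub>m k) $$ (i,l) * D $$ (l,j))"
    using D Suc.prems by (simp add: scalar_prod_def)
  also have "\<dots> = (\<Sum>l\<in>{0..<n}. if l = i then D $$ (i,i) ^ k * D $$ (i,j) else 0)"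
    by (rule sum.cong) (auto simp: Suc.hyps Suc.prems)
  also have "\<dots> = D $$ (i,i) ^ k * D $$ (i,j)" using Suc.prems by (simp add: sum.delta')
  also have "\<dots> = (if i = j then D $$ (i,i) ^ Suc k else 0)"
    using dg D Suc.prems unfolding diagonal_mat_def by (auto simp: mult.commute)
  finally show ?case .
qed

lemma diag_pow_mult_index:
  fixes D :: "'a::comm_ring_1 mat"
  assumes D: "D \<in> carrier_mat n n" and dg: "diagonal_mat D" and i: "i < n" and Z: "Z \<in> carrier_mat n nc"
    and c: "c < nc"
  shows "(D ^\<^sub>m k * Z) $$ (i,c) = D $$ (i,i) ^ k * Z $$ (i,c)"
proof -
  have "(D ^\<^sub>m k * Z) $$ (i,c) = (\<Sum>l\<in>{0..<n}. (D ^\<^sub>m k) $$ (i,l) * Z $$ (l,c))"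
    using D Z i c by (simp add: scalar_prod_def)
  also have "\<dots> = (\<Sum>l\<in>{0..<n}. if l = i then D $$ (i,i) ^ k * Z $$ (i,c) else 0)"
    by (rule sum.cong) (auto simp: diag_pow_index[OF D dg i])
  also have "\<dots> = D $$ (i,i) ^ k * Z $$ (i,c)" using i by (simp add: sum.delta')
  finally show ?thesis .
qed

lemma sum_even_odd: "(\<Sum>j<2*(m::nat). g j) = (\<Sum>k<m. g (2*k) + g (2*k+1))"
  by (induct m) (auto simp: mult_2 ac_simps)

lemma poly_few_roots_zero:
  fixes p :: "'a::idom poly"
  assumes deg: "\<And>k. k \<ge> m \<Longrightarrow> coeff p k = 0" and S: "finite S" "card S \<ge> m"
    and roots: "\<And>x. x \<in> S \<Longrightarrow> poly p x = 0"
  shows "p = 0"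
proof (rule ccontr)
  assume p: "p \<noteq> 0"
  then have m: "m > 0" using deg by (metis leading_coeff_0_iff le0 neq0_conv)
  have "degree p \<le> m - 1" by (rule degree_le) (use deg m in auto)
  moreover have "card S \<le> card {x. poly p x = 0}"
    by (rule card_mono[OF poly_roots_finite[OF p]]) (use roots in auto)
  moreover have "card {x. poly p x = 0} \<le> degree p" by (rule card_poly_roots_bound[OF p])
  ultimately show False using S m by linarith
qed

lemma left_kernel_trivial:
  fixes g :: "nat \<Rightarrow> nat \<Rightarrow> 'a::field"
  assumes d: "det (mat m m (\<lambda>(r,c). g r c)) \<noteq> 0" and y: "\<And>c. c < m \<Longrightarrow> (\<Sum>r<m. y r * g r c) = 0"
  shows "\<And>r. r < m \<Longrightarrow> y r = 0"
proof -
  let ?M = "mat m m (\<lambda>(r,c). g r c)"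
  have M: "?M \<in> carrier_mat m m" by auto
  have "det (transpose_mat ?M) \<noteq> 0" using d det_transpose[OF M] by simp
  then have nz: "\<not> (\<exists>v. v \<in> carrier_vec m \<and> v \<noteq> 0\<^sub>v m \<and> transpose_mat ?M *\<^sub>v v = 0\<^sub>v m)"
    using det_0_iff_vec_prod_zero_field[of "transpose_mat ?M" m] M by auto
  have "transpose_mat ?M *\<^sub>v vec m y = 0\<^sub>v m"
  proof (rule eq_vecI)
    fix c assume "c < dim_vec (0\<^sub>v m :: 'a vec)"
    then have c: "c < m" by simp
    have "(transpose_mat ?M *\<^sub>v vec m y) $ c = (\<Sum>r\<in>{0..<m}. g r c * y r)"
      using c by (simp add: scalar_prod_def)
    also have "\<dots> = 0" using y[OF c] by (simp add: lessThan_atLeast0 mult.commute)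
    finally show "(transpose_mat ?M *\<^sub>v vec m y) $ c = 0\<^sub>v m $ c" using c by simp
  qed simp
  then have "vec m y = 0\<^sub>v m" using nz vec_carrier[of m y] by blast
  then show "\<And>r. r < m \<Longrightarrow> y r = 0" by (metis index_vec index_zero_vec(1))
qed



lemma coeff_sum_monom: "coeff (\<Sum>k<m. monom (g k) k) j = (if j < m then g j else 0)"
  by (simp add: coeff_sum)

lemma poly_sum_monom: fixes g :: "nat \<Rightarrow> 'a::comm_ring_1" shows "poly (\<Sum>k<m. monom (g k) k) x = (\<Sum>k<m. g k * x ^ k)"
  by (simp add: poly_sum poly_monom)

lemma kernel_core:
  fixes D Z :: "'c::idom mat" and lam zz :: "nat \<Rightarrow> 'c"
  assumes n: "n = 2*m" and D: "D \<in> carrier_mat n n" and dg: "diagonal_mat D"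
    and lam: "\<And>i. i < n \<Longrightarrow> D $$ (i,i) = lam i" and lam_inj: "inj_on lam {..<n}"
    and fn: "\<forall>k<m. f k < n" and finj: "inj_on f {..<m}"
    and Z: "Z \<in> carrier_mat n 2"
    and Zdiff: "\<And>i. i < n \<Longrightarrow> Z $$ (i,0) - Z $$ (i,1) = zz i"
    and Inz: "\<And>i. i < n \<Longrightarrow> i \<notin> f ` {..<m} \<Longrightarrow> zz i = 0 \<and> Z $$ (i,0) \<noteq> 0"
    and Jnz: "\<And>k. k < m \<Longrightarrow> zz (f k) \<noteq> 0"
  shows "det (krylov D Z) \<noteq> 0"
proof -
  have K: "krylov D Z \<in> carrier_mat n n" by (rule krylov_carrier[OF Z D n])
  have "\<not> (\<exists>v. v \<in> carrier_vec n \<and> v \<noteq> 0\<^sub>v n \<and> krylov D Z *\<^sub>v v = 0\<^sub>v n)"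
  proof
    assume "\<exists>v. v \<in> carrier_vec n \<and> v \<noteq> 0\<^sub>v n \<and> krylov D Z *\<^sub>v v = 0\<^sub>v n"
    then obtain v where v: "v \<in> carrier_vec n" and v0: "v \<noteq> 0\<^sub>v n" and Kv: "krylov D Z *\<^sub>v v = 0\<^sub>v n" by blast
    define Fp where "Fp = (\<Sum>k<m. monom (v $ (2*k)) k)"
    define Gp where "Gp = (\<Sum>k<m. monom (v $ (2*k+1)) k)"
    have row: "Z $$ (i,0) * poly Fp (lam i) + Z $$ (i,1) * poly Gp (lam i) = 0" if i: "i < n" for i
    proof -
      have "0 = (krylov D Z *\<^sub>v v) $ i" using Kv i by simp
      also have "\<dots> = (\<Sum>j\<in>{0..<n}. krylov D Z $$ (i,j) * v $ j)"
        using K i v by (simp add: scalar_prod_def)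
      also have "\<dots> = (\<Sum>j<2*m. lam i ^ (j div 2) * Z $$ (i, j mod 2) * v $ j)"
        unfolding n lessThan_atLeast0
        by (rule sum.cong[OF refl]) (use i n in \<open>auto simp: krylov_index[OF Z D n] diag_pow_mult_index[OF D dg _ Z] lam\<close>)
      also have "\<dots> = (\<Sum>k<m. lam i ^ k * Z $$ (i, 0) * v $ (2*k) + lam i ^ k * Z $$ (i, 1) * v $ (2*k+1))"
        by (subst sum_even_odd) simp
      also have "\<dots> = Z $$ (i,0) * poly Fp (lam i) + Z $$ (i,1) * poly Gp (lam i)"
        unfolding Fp_def Gp_def poly_sum_monom by (simp add: sum.distrib sum_distrib_left ac_simps)
      finally show ?thesis by simp
    qed
    define I where "I = {0..<n} - f ` {..<m}"
    have fimg: "f ` {..<m} \<subseteq> {0..<n}" using fn by auto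
    have cardI: "card I = m" unfolding I_def
      using card_Diff_subset[OF finite_imageI fimg] card_image[OF finj] n by simp
    have finI: "finite I" unfolding I_def by simp
    have FG: "Fp + Gp = 0"
    proof (rule poly_few_roots_zero[of m _ "lam ` I"])
      show "coeff (Fp + Gp) k = 0" if "k \<ge> m" for k using that unfolding Fp_def Gp_def by (simp add: coeff_sum_monom)
      show "finite (lam ` I)" using finI by simp
      have "inj_on lam I" by (rule inj_on_subset[OF lam_inj]) (auto simp: I_def)
      then show "m \<le> card (lam ` I)" using cardI card_image[of lam I] by simp
      fix x assume "x \<in> lam ` I"
      then obtain i where i: "i \<in> I" and x: "x = lam i" by auto
      then have i': "i < n" "i \<notin> f ` {..<m}" unfolding I_def by auto
      from Inz[OF i'] have z0: "zz i = 0" and Zi: "Z $$ (i,0) \<noteq> 0" by auto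
      have "Z $$ (i,1) = Z $$ (i,0)" using Zdiff[OF i'(1)] z0 by simp
      with row[OF i'(1)] have "Z $$ (i,0) * (poly Fp (lam i) + poly Gp (lam i)) = 0"
        by (simp add: distrib_left)
      with Zi show "poly (Fp + Gp) x = 0" unfolding x by simp
    qed
    have G: "Gp = 0"
    proof (rule poly_few_roots_zero[of m _ "lam ` f ` {..<m}"])
      show "coeff Gp k = 0" if "k \<ge> m" for k using that unfolding Gp_def by (simp add: coeff_sum_monom)
      show "finite (lam ` f ` {..<m})" by simp
      have "inj_on lam (f ` {..<m})" by (rule inj_on_subset[OF lam_inj]) (use fn in auto)
      then have "card (lam ` f ` {..<m}) = card (f ` {..<m})" by (rule card_image)
      then show "m \<le> card (lam ` f ` {..<m})" using card_image[OF finj] by simp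
      fix x assume "x \<in> lam ` f ` {..<m}"
      then obtain k where k: "k < m" and x: "x = lam (f k)" by auto
      have fk: "f k < n" using fn k by auto
      have e1: "Z $$ (f k,1) = Z $$ (f k,0) - zz (f k)" using Zdiff[OF fk] by (simp add: algebra_simps)
      have r: "Z $$ (f k,0) * poly Fp (lam (f k)) + (Z $$ (f k,0) - zz (f k)) * poly Gp (lam (f k)) = 0"
        using row[OF fk] unfolding e1 .
      then have "Z $$ (f k,0) * (poly Fp (lam (f k)) + poly Gp (lam (f k))) - zz (f k) * poly Gp (lam (f k)) = 0"
        by (simp add: algebra_simps)
      moreover have "poly Fp (lam (f k)) + poly Gp (lam (f k)) = 0" using FG
        by (metis poly_0 poly_add)
      ultimately have "zz (f k) * poly Gp (lam (f k)) = 0" by simp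
      with Jnz[OF k] show "poly Gp x = 0" unfolding x by simp
    qed
    from FG G have F: "Fp = 0" by simp
    have "v = 0\<^sub>v n"
    proof (rule eq_vecI)
      fix j assume "j < dim_vec (0\<^sub>v n :: 'c vec)"
      then have j: "j < n" by simp
      define k where "k = j div 2"
      have k: "k < m" using j n unfolding k_def by simp
      have "j = 2*k \<or> j = 2*k+1" unfolding k_def by auto
      moreover have "v $ (2*k) = 0" using arg_cong[OF F, of "\<lambda>p. coeff p k"] k unfolding Fp_def coeff_sum_monom by simp
      moreover have "v $ (2*k+1) = 0" using arg_cong[OF G, of "\<lambda>p. coeff p k"] k unfolding Gp_def coeff_sum_monom by simp
      ultimately show "v $ j = 0\<^sub>v n $ j" using j by auto
    qed (use v in auto)
    with v0 show False by simp
  qed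
  then show ?thesis using det_0_iff_vec_prod_zero[OF K] by simp
qed



lemma const_mult_monom: "[:a:] * monom c k = monom (a * (c::'a::comm_ring_1)) k"
  by (simp add: smult_monom)

lemma sum_monom: "(\<Sum>l\<in>A. monom (g l) k) = monom (\<Sum>l\<in>A. g l) (k::nat)"
  by (induct A rule: infinite_finite_induct) (auto simp: add_monom)

lemma sum_split_2m: "(\<Sum>l<2*m. g l) = (\<Sum>r<m. g r) + (\<Sum>r<m. g (m+r::nat))"
  by (simp add: mult_2 lessThan_atLeast0 sum.atLeastLessThan_concat[symmetric] sum.shift_bounds_nat_ivl[symmetric] add.commute)

lemma sum_restrict_m: "m \<le> n \<Longrightarrow> (\<And>l. m \<le> l \<Longrightarrow> l < n \<Longrightarrow> g l = 0) \<Longrightarrow> (\<Sum>l\<in>{0..<n}. g l) = (\<Sum>l<(m::nat). g l)"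
  unfolding lessThan_atLeast0 by (rule sum.mono_neutral_right) auto

lemma core:
  fixes P Q D :: "'b::field mat" and f :: "nat \<Rightarrow> nat" and \<tau> :: 'b
  assumes n: "n = 2*m"
    and P: "P \<in> carrier_mat n n" and Q: "Q \<in> carrier_mat n n" and D: "D \<in> carrier_mat n n"
    and PQ: "P * Q = 1\<^sub>m n" and QP: "Q * P = 1\<^sub>m n"
    and dg: "diagonal_mat D" and dist: "distinct (diag_mat D)"
    and fn: "\<forall>k<m. f k < n" and finj: "inj_on f {..<m}"
    and Mb: "det (mat m m (\<lambda>(r,c). P $$ (m + r, f c))) \<noteq> 0"
    and Mt: "det (mat m m (\<lambda>(r,c). P $$ (r, f c) - \<tau> * P $$ (m + r, f c))) \<noteq> 0"
  shows "\<exists>\<alpha> \<beta>. det (krylov (map_mat (\<lambda>x. [:x:]) (shear m (-\<tau>) * (P * D * Q) * shear m \<tau>)) (vblock m \<alpha> \<beta>)) \<noteq> 0"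
proof -
  define \<iota> where "\<iota> = (\<lambda>x::'b. [:x:])"
  interpret \<iota>: comm_ring_hom \<iota> unfolding \<iota>_def by (rule const_poly_hom)
  define \<gamma> where "\<gamma> i k = (\<Sum>l<m. Q $$ (i,l) * (P $$ (l, f k) - \<tau> * P $$ (m + l, f k)))" for i k
  define \<alpha> where "\<alpha> r = (\<Sum>k<m. monom (P $$ (r, f k) - \<tau> * P $$ (m + r, f k)) k)" for r
  define \<beta> where "\<beta> r = - (\<Sum>k<m. monom (P $$ (m + r, f k)) k)" for r
  define V where "V = vblock m \<alpha> \<beta>"
  define A0 where "A0 = shear m (-\<tau>) * (P * D * Q) * shear m \<tau>"
  define W0 where "W0 = Q * shear m \<tau>"
  define zz where "zz i = (\<Sum>k<m. if i = f k then monom 1 k else (0 :: 'b poly))" for i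
  have S: "shear m c \<in> carrier_mat n n" for c using n by simp
  have A0: "A0 \<in> carrier_mat n n" unfolding A0_def
    by (rule mult_carrier_mat[OF mult_carrier_mat[OF S mult_carrier_mat[OF mult_carrier_mat[OF P D] Q]] S])
  have W0: "W0 \<in> carrier_mat n n" unfolding W0_def by (rule mult_carrier_mat[OF Q S])
  have V: "V \<in> carrier_mat n 2" unfolding V_def n by simp
  have SSX: "shear m \<tau> * (shear m (-\<tau>) * X) = X" if X: "X \<in> carrier_mat n nc" for X nc
  proof -
    have "shear m \<tau> * (shear m (-\<tau>) * X) = (shear m \<tau> * shear m (-\<tau>)) * X"
      by (rule assoc_mult_mat[OF S S X, symmetric])
    also have "\<dots> = X" unfolding shear_mult n[symmetric] using X by simp
    finally show ?thesis .
  qed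
  have QPX: "Q * (P * X) = X" if X: "X \<in> carrier_mat n nc" for X nc
  proof -
    have "Q * (P * X) = (Q * P) * X" by (rule assoc_mult_mat[OF Q P X, symmetric])
    also have "\<dots> = X" unfolding QP using X by simp
    finally show ?thesis .
  qed
  have WA0: "W0 * A0 = D * W0"
  proof -
    have "W0 * A0 = Q * (shear m \<tau> * (shear m (-\<tau>) * (P * (D * (Q * shear m \<tau>)))))"
      unfolding W0_def A0_def using S[of \<tau>] S[of "-\<tau>"] P D Q by (simp add: assoc_mult_mat[of _ n n _ n _ n])
    also have "\<dots> = Q * (P * (D * (Q * shear m \<tau>)))"
      by (subst SSX[OF mult_carrier_mat[OF P mult_carrier_mat[OF D mult_carrier_mat[OF Q S]]]]) (rule refl)
    also have "\<dots> = D * (Q * shear m \<tau>)"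
      by (subst QPX[OF mult_carrier_mat[OF D mult_carrier_mat[OF Q S]]]) (rule refl)
    finally show ?thesis unfolding W0_def .
  qed
  define W where "W = map_mat \<iota> W0"
  define A' where "A' = map_mat \<iota> A0"
  define D' where "D' = map_mat \<iota> D"
  have W: "W \<in> carrier_mat n n" and A': "A' \<in> carrier_mat n n" and D': "D' \<in> carrier_mat n n"
    unfolding W_def A'_def D'_def using W0 A0 D by auto
  have WA: "W * A' = D' * W"
    unfolding W_def A'_def D'_def
    using \<iota>.mat_hom_mult[OF W0 A0] \<iota>.mat_hom_mult[OF D W0] WA0 by simp
  define Z where "Z = W * V"
  have Z: "Z \<in> carrier_mat n 2" unfolding Z_def using W V by auto
  define X where "X = shear m (\<iota> \<tau>) * V"
  have Wsplit: "W = map_mat \<iota> Q * shear m (\<iota> \<tau>)"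
    unfolding W_def W0_def using \<iota>.mat_hom_mult[OF Q S[of \<tau>]] map_shear[OF \<iota>.comm_ring_hom_axioms] by simp
  have ZX: "Z = map_mat \<iota> Q * X" unfolding Z_def Wsplit X_def
    using Q S[of "\<iota> \<tau>"] V by (simp add: assoc_mult_mat[of _ n n _ n _ 2])
  have X0: "X $$ (l,0) = (if l < m then \<alpha> l else 0)" if l: "l < n" for l
  proof -
    have "X $$ (l,0) = (\<Sum>p\<in>{0..<n}. shear m (\<iota> \<tau>) $$ (l,p) * V $$ (p,0))"
      unfolding X_def using l V n by (simp add: scalar_prod_def)
    also have "\<dots> = (\<Sum>p\<in>{0..<n}. if p = l then (if l < m then \<alpha> l else 0) else 0)"
      by (rule sum.cong[OF refl]) (use l n in \<open>auto simp: shear_index V_def vblock_index\<close>)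
    also have "\<dots> = (if l < m then \<alpha> l else 0)" using l by simp
    finally show ?thesis .
  qed
  have X1: "X $$ (l,1) = (if l < m then \<iota> \<tau> * \<beta> l else \<beta> (l - m))" if l: "l < n" for l
  proof -
    have "X $$ (l,1) = (\<Sum>p\<in>{0..<n}. shear m (\<iota> \<tau>) $$ (l,p) * V $$ (p,1))"
      unfolding X_def using l V n by (simp add: scalar_prod_def)
    also have "\<dots> = (\<Sum>p\<in>{0..<n}. (if p = l + m then \<iota> \<tau> * \<beta> l else 0) + (if p = l then (if m \<le> l then \<beta> (l - m) else 0) else 0))"
      by (rule sum.cong[OF refl]) (use l n in \<open>auto simp: shear_index V_def vblock_index\<close>)
    also have "\<dots> = (if l < m then \<iota> \<tau> * \<beta> l else \<beta> (l - m))"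
      using l n by (simp add: sum.distrib)
    finally show ?thesis .
  qed
  have Zidx: "Z $$ (i,c) = (\<Sum>l\<in>{0..<n}. \<iota> (Q $$ (i,l)) * X $$ (l,c))" if "i < n" "c < 2" for i c
    unfolding ZX using that Q V n by (simp add: X_def scalar_prod_def)
  have Xd: "X $$ (l,0) - X $$ (l,1) = (\<Sum>k<m. monom (P $$ (l, f k)) k)" if l: "l < n" for l
  proof (cases "l < m")
    case True
    have "X $$ (l,0) - X $$ (l,1) = \<alpha> l - \<iota> \<tau> * \<beta> l" using X0[OF l] X1[OF l] True by simp
    also have "\<dots> = \<alpha> l + (\<Sum>k<m. monom (\<tau> * P $$ (m + l, f k)) k)"
      by (simp add: \<beta>_def \<iota>_def sum_distrib_left const_mult_monom smult_monom)
    also have "\<dots> = (\<Sum>k<m. monom (P $$ (l, f k)) k)"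
      unfolding \<alpha>_def sum.distrib[symmetric] by (rule sum.cong) (auto simp: add_monom)
    finally show ?thesis .
  next
    case False
    then show ?thesis using X0[OF l] X1[OF l] by (simp add: \<beta>_def)
  qed
  have Zdiff: "Z $$ (i,0) - Z $$ (i,1) = zz i" if i: "i < n" for i
  proof -
    have "Z $$ (i,0) - Z $$ (i,1) = (\<Sum>l\<in>{0..<n}. \<iota> (Q $$ (i,l)) * (X $$ (l,0) - X $$ (l,1)))"
      using i by (simp add: Zidx algebra_simps sum_subtractf)
    also have "\<dots> = (\<Sum>l\<in>{0..<n}. \<Sum>k<m. monom (Q $$ (i,l) * P $$ (l, f k)) k)"
    proof (rule sum.cong[OF refl])
      fix l assume "l \<in> {0..<n}"
      then have l: "l < n" by simp
      show "\<iota> (Q $$ (i,l)) * (X $$ (l,0) - X $$ (l,1)) = (\<Sum>k<m. monom (Q $$ (i,l) * P $$ (l, f k)) k)"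
        unfolding Xd[OF l] by (simp add: sum_distrib_left \<iota>_def const_mult_monom smult_monom)
    qed
    also have "\<dots> = (\<Sum>k<m. monom (\<Sum>l\<in>{0..<n}. Q $$ (i,l) * P $$ (l, f k)) k)"
      by (subst sum.swap) (simp add: sum_monom)
    also have "\<dots> = (\<Sum>k<m. monom (if i = f k then 1 else 0) k)"
    proof (rule sum.cong[OF refl])
      fix k assume "k \<in> {..<m}"
      then have fk: "f k < n" using fn by auto
      have "(\<Sum>l\<in>{0..<n}. Q $$ (i,l) * P $$ (l, f k)) = (Q * P) $$ (i, f k)"
        using i fk P Q by (simp add: scalar_prod_def)
      also have "\<dots> = (if i = f k then 1 else 0)" unfolding QP using i fk by simp
      finally show "monom (\<Sum>l\<in>{0..<n}. Q $$ (i,l) * P $$ (l, f k)) k = monom (if i = f k then 1 else 0) k" by simp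
    qed
    also have "\<dots> = zz i" unfolding zz_def by (rule sum.cong) auto
    finally show ?thesis .
  qed
  have Z0: "Z $$ (i,0) = (\<Sum>k<m. monom (\<gamma> i k) k)" if i: "i < n" for i
  proof -
    have "Z $$ (i,0) = (\<Sum>l<m. \<iota> (Q $$ (i,l)) * X $$ (l,0))"
      using i n by (simp add: Zidx, intro sum_restrict_m) (auto simp: X0)
    also have "\<dots> = (\<Sum>l<m. \<Sum>k<m. monom (Q $$ (i,l) * (P $$ (l, f k) - \<tau> * P $$ (m + l, f k))) k)"
      by (rule sum.cong[OF refl]) (use n in \<open>auto simp: X0 \<alpha>_def sum_distrib_left \<iota>_def const_mult_monom smult_monom\<close>)
    also have "\<dots> = (\<Sum>k<m. monom (\<gamma> i k) k)"
      unfolding \<gamma>_def by (subst sum.swap) (simp add: sum_monom)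
    finally show ?thesis .
  qed
  have \<gamma>nz: "\<exists>k<m. \<gamma> i k \<noteq> 0" if i: "i < n" "i \<notin> f ` {..<m}" for i
  proof (rule ccontr)
    assume "\<not> ?thesis"
    then have g0: "\<And>k. k < m \<Longrightarrow> (\<Sum>l<m. Q $$ (i,l) * (P $$ (l, f k) - \<tau> * P $$ (m + l, f k))) = 0"
      unfolding \<gamma>_def by auto
    have q1: "\<And>l. l < m \<Longrightarrow> Q $$ (i,l) = 0"
      by (rule left_kernel_trivial[OF Mt]) (use g0 in auto)
    have q2: "\<And>r. r < m \<Longrightarrow> Q $$ (i,m+r) = 0"
    proof (rule left_kernel_trivial[OF Mb, of "\<lambda>r. Q $$ (i, m+r)"])
      fix c assume c: "c < m"
      then have fc: "f c < n" and ifc: "i \<noteq> f c" using fn i by auto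
      have "(Q * P) $$ (i, f c) = (\<Sum>l<2*m. Q $$ (i,l) * P $$ (l, f c))"
        using i fc P Q n by (simp add: scalar_prod_def lessThan_atLeast0)
      also have "\<dots> = (\<Sum>r<m. Q $$ (i,m+r) * P $$ (m+r, f c))"
        unfolding sum_split_2m using q1 by simp
      finally show "(\<Sum>r<m. Q $$ (i,m+r) * P $$ (m+r, f c)) = 0" using QP i fc ifc by simp
    qed
    have "(Q * P) $$ (i, i) = (\<Sum>l<2*m. Q $$ (i,l) * P $$ (l, i))"
      using i P Q n by (simp add: scalar_prod_def lessThan_atLeast0)
    also have "\<dots> = 0" unfolding sum_split_2m using q1 q2 by simp
    finally show False using QP i by simp
  qed
  have kc: "det (krylov D' Z) \<noteq> 0"
  proof (rule kernel_core[OF n D' _ _ _ fn finj Z Zdiff])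
    show "diagonal_mat D'" using dg D unfolding D'_def diagonal_mat_def by auto
    show "D' $$ (i,i) = \<iota> (D $$ (i,i))" if "i < n" for i using that D unfolding D'_def by auto
    show "inj_on (\<lambda>i. \<iota> (D $$ (i,i))) {..<n}"
    proof (rule inj_onI)
      fix i j assume ij: "i \<in> {..<n}" "j \<in> {..<n}" "\<iota> (D $$ (i,i)) = \<iota> (D $$ (j,j))"
      then have "D $$ (i,i) = D $$ (j,j)" unfolding \<iota>_def by simp
      then have "diag_mat D ! i = diag_mat D ! j" using ij D unfolding diag_mat_def by auto
      then show "i = j" using dist ij D nth_eq_iff_index_eq[OF dist] unfolding diag_mat_def by auto
    qed
    show "zz i = 0 \<and> Z $$ (i,0) \<noteq> 0" if "i < n" "i \<notin> f ` {..<m}" for i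
    proof
      show "zz i = 0" unfolding zz_def using that by (auto intro!: sum.neutral)
      from \<gamma>nz[OF that] obtain k where k: "k < m" "\<gamma> i k \<noteq> 0" by blast
      have "coeff (Z $$ (i,0)) k = \<gamma> i k" using Z0[OF that(1)] k by (simp add: coeff_sum_monom)
      with k show "Z $$ (i,0) \<noteq> 0" by auto
    qed
    show "zz (f k) \<noteq> 0" if k: "k < m" for k
    proof -
      have "zz (f k) = (\<Sum>k'<m. if k' = k then monom 1 k' else 0)"
        unfolding zz_def by (rule sum.cong[OF refl]) (use finj k in \<open>auto simp: inj_on_def\<close>)
      also have "\<dots> = monom 1 k" using k by simp
      finally show ?thesis by simp
    qed
  qed
  have "det (krylov A' V) \<noteq> 0"
    by (rule det_krylov_conj[OF W A' D' WA V n]) (use kc Z_def in simp)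
  then show ?thesis unfolding A'_def A0_def V_def \<iota>_def by blast
qed



lemma mpeval_avoid:
  fixes p :: "'a::comm_ring_1 mpoly" and g :: "'a \<Rightarrow> 'c::idom"
  assumes G: "infinite G" and nz: "mpeval g \<sigma>0 p \<noteq> 0"
  shows "\<exists>\<sigma>. (\<forall>i<N. \<sigma> i \<in> G) \<and> mpeval g \<sigma> p \<noteq> 0"
proof (induct N)
  case 0 then show ?case using nz by auto
next
  case (Suc N)
  then obtain \<sigma> where \<sigma>G: "\<forall>i<N. \<sigma> i \<in> G" and \<sigma>nz: "mpeval g \<sigma> p \<noteq> 0" by blast
  define q where "q = mpeval (\<lambda>c. [:g c:]) (\<lambda>i. if i = N then [:0,1:] else [:\<sigma> i:]) p"
  have qs: "poly q s = mpeval g (\<sigma>(N := s)) p" for s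
  proof -
    have "poly q s = mpeval ((\<lambda>x. poly x s) \<circ> (\<lambda>c. [:g c:])) ((\<lambda>x. poly x s) \<circ> (\<lambda>i. if i = N then [:0,1:] else [:\<sigma> i:])) p"
      unfolding q_def by (rule mpeval_compose[OF poly_hom.comm_ring_hom_axioms])
    also have "((\<lambda>x. poly x s) \<circ> (\<lambda>c. [:g c:])) = g" by (rule ext) simp
    also have "((\<lambda>x. poly x s) \<circ> (\<lambda>i. if i = N then [:0,1:] else [:\<sigma> i:])) = \<sigma>(N := s)" by (rule ext) simp
    finally show ?thesis .
  qed
  have q0: "q \<noteq> 0" using qs[of "\<sigma> N"] \<sigma>nz by auto
  have "infinite (G - {x. poly q x = 0})" using G poly_roots_finite[OF q0] by (rule Diff_infinite_finite[rotated])
  then have "G - {x. poly q x = 0} \<noteq> {}" by (rule infinite_imp_nonempty)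
  then obtain s where s: "s \<in> G" "poly q s \<noteq> 0" by blast
  have nzs: "mpeval g (\<sigma>(N := s)) p \<noteq> 0" using s(2) unfolding qs .
  have "\<forall>i<Suc N. (\<sigma>(N := s)) i \<in> G" using \<sigma>G s(1) by (auto simp: less_Suc_eq)
  with nzs show ?case by blast
qed

lemma comm_ring_hom_comp: "comm_ring_hom f \<Longrightarrow> comm_ring_hom g \<Longrightarrow> comm_ring_hom (g \<circ> f)"
proof -
  assume f: "comm_ring_hom f" and g: "comm_ring_hom g"
  interpret f: comm_ring_hom f by (rule f)
  interpret g: comm_ring_hom g by (rule g)
  show ?thesis by unfold_locales (auto simp: f.hom_add g.hom_add f.hom_mult g.hom_mult)
qed

theorem mainTheorem2:
  fixes A :: "'a::field mat" and D :: "'b::field mat"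
    and h :: "'a \<Rightarrow> 'b" and n m :: nat
  assumes "n = 2 * m" and "0 < m"
    and "A \<in> carrier_mat n n"
    and "field_hom h"
    and "similar_mat (map_mat h A) D" and "diagonal_mat D" and "distinct (diag_mat D)"
  shows "\<exists>S :: 'a set. finite S \<and> card S \<le> m \<and>
    (\<forall>t. t \<notin> S \<longrightarrow>
       det (krylov (map_mat mp_const (A_tilde m t A)) (v_indet m)) \<noteq> 0 \<and>
       (infinite (UNIV :: 'a set) \<longrightarrow>
          (\<exists>a b :: nat \<Rightarrow> 'a. det (krylov (A_tilde m t A) (vblock m a b)) \<noteq> 0)))"
proof -
  note n = assms(1) and A = assms(3) and dg = assms(6) and dist = assms(7)
  interpret h: field_hom h by (rule assms(4))
  obtain P Q where wit: "similar_mat_wit (map_mat h A) D P Q" using assms(5) unfolding similar_mat_def by blast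
  have dimA: "dim_row (map_mat h A) = n" using A by simp
  from wit[unfolded similar_mat_wit_def Let_def dimA]
  have P: "P \<in> carrier_mat n n" and Q: "Q \<in> carrier_mat n n" and D: "D \<in> carrier_mat n n"
    and PQ: "P * Q = 1\<^sub>m n" and QP: "Q * P = 1\<^sub>m n" and hA: "map_mat h A = P * D * Q" by auto
  define B where "B = mat m n (\<lambda>(r,c). P $$ (m + r, c))"
  have B: "B \<in> carrier_mat m n" unfolding B_def by auto
  have Bker: "\<forall>r<m. y r = 0" if y: "\<forall>c<n. (\<Sum>r<m. y r * B $$ (r,c)) = 0" for y
  proof (intro allI impI)
    fix r assume r: "r < m"
    define y' where "y' l = (if m \<le> l then y (l - m) else 0)" for l
    have y'P: "(\<Sum>l\<in>{0..<n}. y' l * P $$ (l,c)) = 0" if c: "c < n" for c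
    proof -
      have "(\<Sum>l\<in>{0..<n}. y' l * P $$ (l,c)) = (\<Sum>l<2*m. y' l * P $$ (l,c))" using n by (simp add: lessThan_atLeast0)
      also have "\<dots> = (\<Sum>r<m. y r * B $$ (r,c))" unfolding sum_split_2m using c by (simp add: y'_def B_def)
      finally show ?thesis using y c by simp
    qed
    have "(\<Sum>l\<in>{0..<n}. y' l * (P * Q) $$ (l, m + r)) = (\<Sum>l\<in>{0..<n}. if l = m + r then y r else 0)"
      unfolding PQ by (rule sum.cong[OF refl]) (use r n in \<open>auto simp: y'_def\<close>)
    also have "\<dots> = y r" using r n by simp
    finally have "y r = (\<Sum>l\<in>{0..<n}. y' l * (P * Q) $$ (l, m + r))" by simp
    also have "\<dots> = (\<Sum>l\<in>{0..<n}. \<Sum>c\<in>{0..<n}. y' l * (P $$ (l,c) * Q $$ (c, m + r)))"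
      by (rule sum.cong[OF refl]) (use P Q r n in \<open>auto simp: scalar_prod_def sum_distrib_left\<close>)
    also have "\<dots> = (\<Sum>c\<in>{0..<n}. (\<Sum>l\<in>{0..<n}. y' l * P $$ (l,c)) * Q $$ (c, m + r))"
      by (subst sum.swap) (simp add: sum_distrib_right mult.assoc)
    also have "\<dots> = 0" using y'P by simp
    finally show "y r = 0" .
  qed
  from col_select[OF B Bker] obtain f where fn: "\<forall>c<m. f c < n" and finj: "inj_on f {..<m}"
    and fdet: "det (mat m m (\<lambda>(r,c). B $$ (r, f c))) \<noteq> 0" by blast
  have "mat m m (\<lambda>(r,c). B $$ (r, f c)) = mat m m (\<lambda>(r,c). P $$ (m + r, f c))"
    by (rule eq_matI) (use fn in \<open>auto simp: B_def\<close>)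
  with fdet have Mb: "det (mat m m (\<lambda>(r,c). P $$ (m + r, f c))) \<noteq> 0" by simp
  define Bad where "Bad = {\<tau>. det (mat m m (\<lambda>(r,c). P $$ (r, f c) - \<tau> * P $$ (m + r, f c))) = 0}"
  have Bad: "finite Bad" "card Bad \<le> m"
    using pencil_bad_card[of m "\<lambda>r c. P $$ (m + r, f c)" "\<lambda>r c. P $$ (r, f c)"] Mb unfolding Bad_def by auto
  define S where "S = h -` Bad"
  have finS: "finite S" unfolding S_def by (rule finite_vimageI[OF Bad(1) h.inj_f])
  have "card S = card (h ` S)" by (rule card_image[symmetric]) (use h.inj_f in \<open>auto simp: inj_on_def\<close>)
  also have "\<dots> \<le> card Bad" by (rule card_mono[OF Bad(1)]) (auto simp: S_def)
  finally have cardS: "card S \<le> m" using Bad(2) by simp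
  define \<phi> where "\<phi> = (\<lambda>x. [:h x:])"
  have \<phi>: "comm_ring_hom \<phi>" unfolding \<phi>_def
    using comm_ring_hom_comp[OF h.comm_ring_hom_axioms const_poly_hom] by (simp add: o_def)
  interpret \<phi>: comm_ring_hom \<phi> by (rule \<phi>)
  have \<phi>inj: "inj \<phi>" unfolding \<phi>_def using h.inj_f by (auto simp: inj_on_def)
  have good: "det (krylov (map_mat mp_const (A_tilde m t A)) (v_indet m)) \<noteq> 0 \<and>
       (infinite (UNIV :: 'a set) \<longrightarrow>
          (\<exists>a b :: nat \<Rightarrow> 'a. det (krylov (A_tilde m t A) (vblock m a b)) \<noteq> 0))" if t: "t \<notin> S" for t
  proof -
    define \<tau> where "\<tau> = h t"
    have Mt: "det (mat m m (\<lambda>(r,c). P $$ (r, f c) - \<tau> * P $$ (m + r, f c))) \<noteq> 0"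
      using t unfolding S_def Bad_def \<tau>_def by auto
    from core[OF n P Q D PQ QP dg dist fn finj Mb Mt] obtain \<alpha> \<beta> where
      ab: "det (krylov (map_mat (\<lambda>x. [:x:]) (shear m (-\<tau>) * (P * D * Q) * shear m \<tau>)) (vblock m \<alpha> \<beta>)) \<noteq> 0"
      by blast
    define Mtil where "Mtil = A_tilde m t A"
    have S': "shear m c \<in> carrier_mat n n" for c :: 'a using n by simp
    have Mtil: "Mtil \<in> carrier_mat n n" unfolding Mtil_def A_tilde_def
      by (rule mult_carrier_mat[OF mult_carrier_mat[OF S' A] S'])
    have hM: "map_mat h Mtil = shear m (-\<tau>) * (P * D * Q) * shear m \<tau>"
    proof -
      have "map_mat h Mtil = map_mat h (shear m (-t) * A) * map_mat h (shear m t)"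
        unfolding Mtil_def A_tilde_def by (rule h.mat_hom_mult[OF mult_carrier_mat[OF S' A] S'])
      also have "map_mat h (shear m (-t) * A) = map_mat h (shear m (-t)) * map_mat h A"
        by (rule h.mat_hom_mult[OF S' A])
      finally show ?thesis unfolding hA map_shear[OF h.comm_ring_hom_axioms] \<tau>_def h.hom_uminus .
    qed
    have \<phi>M: "map_mat \<phi> Mtil = map_mat (\<lambda>x. [:x:]) (shear m (-\<tau>) * (P * D * Q) * shear m \<tau>)"
      unfolding hM[symmetric] \<phi>_def by (rule eq_matI) auto
    define \<sigma>0 where "\<sigma>0 i = (if i < m then \<alpha> i else \<beta> (i - m))" for i
    have vb: "vblock m (\<lambda>i. \<sigma> i) (\<lambda>i. \<sigma> (m + i)) = vblock m (\<lambda>i. \<sigma> i) (\<lambda>i. \<sigma> (m + i))" for \<sigma> :: "nat \<Rightarrow> 'b poly" ..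
    have vb0: "vblock m (\<lambda>i. \<sigma>0 i) (\<lambda>i. \<sigma>0 (m + i)) = vblock m \<alpha> \<beta>"
      by (rule eq_matI) (auto simp: vblock_def \<sigma>0_def)
    define pt where "pt = det (krylov (map_mat mp_const Mtil) (v_indet m))"
    have ev: "mpeval \<phi> \<sigma> pt = det (krylov (map_mat \<phi> Mtil) (vblock m (\<lambda>i. \<sigma> i) (\<lambda>i. \<sigma> (m + i))))" for \<sigma>
      unfolding pt_def by (rule eval_det_krylov[OF \<phi>]) (use Mtil n in simp)
    have nz0: "mpeval \<phi> \<sigma>0 pt \<noteq> 0" unfolding ev vb0 \<phi>M using ab .
    have part1: "pt \<noteq> 0" using nz0 mpeval_zero[OF \<phi>] by auto
    have part2: "\<exists>a b :: nat \<Rightarrow> 'a. det (krylov (A_tilde m t A) (vblock m a b)) \<noteq> 0"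
      if inf: "infinite (UNIV :: 'a set)"
    proof -
      have G: "infinite (range \<phi>)" using finite_imageD[of \<phi> UNIV] \<phi>inj inf by blast
      from mpeval_avoid[OF G nz0, of "2*m"] obtain \<sigma> where \<sigma>G: "\<forall>i<2*m. \<sigma> i \<in> range \<phi>"
        and \<sigma>nz: "mpeval \<phi> \<sigma> pt \<noteq> 0" by blast
      define a where "a i = (SOME c. \<phi> c = \<sigma> i)" for i
      define b where "b i = (SOME c. \<phi> c = \<sigma> (m + i))" for i
      have ex: "\<exists>c. \<phi> c = \<sigma> i" if "i < 2*m" for i
      proof -
        from \<sigma>G that have "\<sigma> i \<in> range \<phi>" by simp
        then show ?thesis by (metis rangeE)
      qed
      have a: "\<phi> (a i) = \<sigma> i" if "i < m" for i
        unfolding a_def by (rule someI_ex[OF ex]) (use that in simp)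
      have b: "\<phi> (b i) = \<sigma> (m + i)" if "i < m" for i
        unfolding b_def by (rule someI_ex[OF ex]) (use that in simp)
      have "vblock m (\<lambda>i. \<sigma> i) (\<lambda>i. \<sigma> (m + i)) = map_mat \<phi> (vblock m a b)"
        by (rule eq_matI) (auto simp: vblock_def a b)
      then have "mpeval \<phi> \<sigma> pt = det (krylov (map_mat \<phi> Mtil) (map_mat \<phi> (vblock m a b)))" unfolding ev by simp
      also have "krylov (map_mat \<phi> Mtil) (map_mat \<phi> (vblock m a b)) = map_mat \<phi> (krylov Mtil (vblock m a b))"
        by (rule krylov_hom[OF \<phi>, symmetric]) (use Mtil n in auto)
      also have "det \<dots> = \<phi> (det (krylov Mtil (vblock m a b)))" by simp
      finally have "det (krylov Mtil (vblock m a b)) \<noteq> 0" using \<sigma>nz by auto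
      then show ?thesis unfolding Mtil_def by blast
    qed
    show ?thesis using part1 part2 unfolding pt_def Mtil_def by blast
  qed
  show ?thesis
    by (rule exI[of _ S]) (use finS cardS good in blast)
qed

end
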